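(* There is a faithful functor $\Phi\colon\Delta R^{op}\to\mathcal{I}\Gamma(as)$, the identity on objects, such that for all $n$: $\Phi$ sends the (opposite of the) coface $\delta_i\colon[n-1]\to[n]$ ($0\leqslant i\leqslant n$) to $d_i\colon[n]\to[n-1]$, the (opposite of the) codegeneracy $\sigma_j\colon[n+1]\to[n]$ ($0\leqslant j\leqslant n$) to $s_j\colon[n]\to[n+1]$, and the (opposite of the) reflection $r_n$ of $[n]$ to $\rho_n$. Consequently $\Delta R^{op}$ is isomorphic to the subcategory $\mathcal{R}$ of $\mathcal{I}\Gamma(as)$ generated by the morphisms $d_i$, $s_j$, $\rho_n$.
   Context: Let $C_2=\{1,t\}$ and $[n]=\{0,\dots,n\}$. The category $\mathcal{IF}(as)$ has objects $[n]$; a morphism $f\colon[n]\to[m]$ is a map of sets with a total order on each fibre $f^{-1}(i)$ and a label in $C_2$ on each element of $[n]$ (written $j^\alpha$). For $S=\{j_1^{\alpha_1}<\cdots<j_r^{\alpha_r}\}$ put $1\ast S=S$, $t\ast S=\{j_r^{t\alpha_r}<\cdots<j_1^{t\alpha_1}\}$; the composite of $f\colon[n]\to[m]$, $g\colon[m]\to[p]$ has underlying map $g\circ f$ and fibres $(g\circ f)^{-1}(i)=\coprod_{j^\alpha\in g^{-1}(i)}\alpha\ast f^{-1}(j)$ (ordered disjoint union). $\mathcal{I}\Gamma(as)$ is the subcategory of morphisms with $f(0)=0$. Morphisms of $\mathcal{I}\Gamma(as)$ (all labels $1$ unless stated): for $n\geqslant1$ and $0\leqslant i\leqslant n-1$,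 $d_i\colon[n]\to[n-1]$ sends $j\mapsto j$ ($j\leqslant i$), $j\mapsto j-1$ ($j>i$), with fibre over $i$ equal to $\{i<i+1\}$; $d_n\colon[n]\to[n-1]$ sends $j\mapsto j$ ($j<n$), $n\mapsto0$, with fibre over $0$ equal to $\{n<0\}$; for $0\leqslant j\leqslant n$, $s_j\colon[n]\to[n+1]$ sends $k\mapsto k$ ($k\leqslant j$), $k\mapsto k+1$ ($k>j$), so the fibre over $j+1$ is empty; $\rho_n\colon[n]\to[n]$ sends $0\mapsto 0$ and $k\mapsto n+1-k$ for $1\leqslant k\leqslant n$, with all labels equal to $t$. The reflexive category $\Delta R$ has objects $[n]$; a morphism $[n]\to[m]$ is a pair $(\phi,g)$ with $\phi\colon[n]\to[m]$ order-preserving and $g\in\{1,r_n\}$, where $r_n(i)=n-i$; composition is $(\psi,1)\circ(\phi,g)=(\psi\circ\phi,g)$ and $(\psi,r_m)\circ(\phi,g)=(\psi\circ\phi',r_ng)$ where $\phi'(i)=m-\phi(n-i)$; $r_n^2=1$. Here $\delta_i\colon[n-1]\to[n]$ is the order-preserving injection missing $i$, $\sigma_j\colon[n+1]\to[n]$ the order-preserving surjection with $\sigma_j(j)=\sigma_j(j+1)=j$, both regarded as $(\delta_i,1)$, $(\sigma_j,1)$, and the reflection is $(\mathrm{id},r_n)$. *)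

theory Defs
  imports Main
begin

text \<open>A morphism f : [n] \<rightarrow> [m] of IF(as) is encoded as a triple (n, m, F), where
  F is a list of length m+1; F ! i is the fibre over i, given as the list of its
  elements in their total order, each element j paired with its label in C2
  (False = 1, True = t).\<close>

type_synonym ifmor = "nat \<times> nat \<times> (nat \<times> bool) list list"

definition if_src :: "ifmor \<Rightarrow> nat" where "if_src f = fst f"
definition if_tgt :: "ifmor \<Rightarrow> nat" where "if_tgt f = fst (snd f)"
definition if_fib :: "ifmor \<Rightarrow> (nat \<times> bool) list list" where "if_fib f = snd (snd f)"

definition if_wf :: "ifmor \<Rightarrow> bool" where
  "if_wf f \<longleftrightarrow> length (if_fib f) = Suc (if_tgt f)
     \<and> distinct (map fst (concat (if_fib f)))
     \<and> set (map fst (concat (if_fib f))) = {0..if_src f}"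

text \<open>Morphisms of I Gamma(as): those with f(0) = 0, i.e. 0 lies in the fibre over 0.\<close>
definition IGamma_mor :: "ifmor \<Rightarrow> bool" where
  "IGamma_mor f \<longleftrightarrow> if_wf f \<and> 0 \<in> fst ` set (if_fib f ! 0)"

definition lab_act :: "bool \<Rightarrow> (nat \<times> bool) list \<Rightarrow> (nat \<times> bool) list" where
  "lab_act \<alpha> S = (if \<alpha> then rev (map (\<lambda>(k, \<beta>). (k, \<not> \<beta>)) S) else S)"

definition if_comp :: "ifmor \<Rightarrow> ifmor \<Rightarrow> ifmor" where
  "if_comp g f = (if_src f, if_tgt g,
      map (\<lambda>Gi. concat (map (\<lambda>(j, \<alpha>). lab_act \<alpha> (if_fib f ! j)) Gi)) (if_fib g))"

definition if_id :: "nat \<Rightarrow> ifmor" where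
  "if_id n = (n, n, map (\<lambda>i. [(i, False)]) [0..<Suc n])"

definition dmor :: "nat \<Rightarrow> nat \<Rightarrow> ifmor" where
  "dmor n i = (n, n - 1,
     map (\<lambda>k. if i < n then
                 (if k < i then [(k, False)] else if k = i then [(i, False), (Suc i, False)]
                  else [(Suc k, False)])
               else
                 (if k = 0 then [(n, False), (0, False)] else [(k, False)]))
         [0..<n])"

definition smor :: "nat \<Rightarrow> nat \<Rightarrow> ifmor" where
  "smor n j = (n, Suc n,
     map (\<lambda>k. if k \<le> j then [(k, False)] else if k = Suc j then [] else [(k - 1, False)])
         [0..<Suc (Suc n)])"

definition rhomor :: "nat \<Rightarrow> ifmor" where
  "rhomor n = (n, n,
     map (\<lambda>k. if k = 0 then [(0, True)] else [(Suc n - k, True)]) [0..<Suc n])"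

inductive_set Rgen :: "ifmor set" where
  R_id: "if_id n \<in> Rgen"
| R_d: "1 \<le> n \<Longrightarrow> i \<le> n \<Longrightarrow> dmor n i \<in> Rgen"
| R_s: "j \<le> n \<Longrightarrow> smor n j \<in> Rgen"
| R_rho: "rhomor n \<in> Rgen"
| R_comp: "f \<in> Rgen \<Longrightarrow> g \<in> Rgen \<Longrightarrow> if_tgt f = if_src g \<Longrightarrow> if_comp g f \<in> Rgen"

text \<open>A morphism (phi, g) : [n] \<rightarrow> [m] is encoded as (n, m, phi, g) with phi given by
  its list of values phi(0), ..., phi(n), and g :: bool (False = 1, True = r_n).\<close>

type_synonym drmor = "nat \<times> nat \<times> nat list \<times> bool"

definition dr_src :: "drmor \<Rightarrow> nat" where "dr_src f = fst f"
definition dr_tgt :: "drmor \<Rightarrow> nat" where "dr_tgt f = fst (snd f)"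
definition dr_map :: "drmor \<Rightarrow> nat list" where "dr_map f = fst (snd (snd f))"
definition dr_refl :: "drmor \<Rightarrow> bool" where "dr_refl f = snd (snd (snd f))"

definition dr_wf :: "drmor \<Rightarrow> bool" where
  "dr_wf f \<longleftrightarrow> length (dr_map f) = Suc (dr_src f) \<and> sorted (dr_map f)
     \<and> (\<forall>x \<in> set (dr_map f). x \<le> dr_tgt f)"

definition dr_comp :: "drmor \<Rightarrow> drmor \<Rightarrow> drmor" where
  "dr_comp q f = (let n = dr_src f; m = dr_tgt f; \<phi> = dr_map f; \<psi> = dr_map q in
     if \<not> dr_refl q then (n, dr_tgt q, map (\<lambda>i. \<psi> ! (\<phi> ! i)) [0..<Suc n], dr_refl f)
     else (n, dr_tgt q, map (\<lambda>i. \<psi> ! (m - \<phi> ! (n - i))) [0..<Suc n], \<not> dr_refl f))"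

definition dr_id :: "nat \<Rightarrow> drmor" where
  "dr_id n = (n, n, [0..<Suc n], False)"

definition delta :: "nat \<Rightarrow> nat \<Rightarrow> drmor" where
  "delta n i = (n - 1, n, map (\<lambda>k. if k < i then k else Suc k) [0..<n], False)"

definition sigma :: "nat \<Rightarrow> nat \<Rightarrow> drmor" where
  "sigma n j = (Suc n, n, map (\<lambda>k. if k \<le> j then k else k - 1) [0..<Suc (Suc n)], False)"

definition dr_reflection :: "nat \<Rightarrow> drmor" where
  "dr_reflection n = (n, n, [0..<Suc n], True)"

end

theory Submission
  imports Defs
begin


definition rf :: "nat \<Rightarrow> nat \<Rightarrow> nat" where "rf n i = (if i = 0 then 0 else Suc n - i)"
definition bf :: "nat list \<Rightarrow> nat \<Rightarrow> nat \<Rightarrow> nat \<Rightarrow> nat list" where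
 "bf p n m i = (if i = 0 then [Suc (p!n)..<Suc m] @ [0..<Suc (p!0)] else [Suc (p!(i-1))..<Suc (p!i)])"
definition pl :: "nat list \<Rightarrow> (nat \<times> bool) list" where "pl L = map (\<lambda>j. (j,False)) L"

definition Phi :: "drmor \<Rightarrow> ifmor" where
 "Phi f = (dr_tgt f, dr_src f, map (\<lambda>i. if dr_refl f then lab_act True (pl (bf (dr_map f) (dr_src f) (dr_tgt f) (rf (dr_src f) i)))
     else pl (bf (dr_map f) (dr_src f) (dr_tgt f) i)) [0..<Suc (dr_src f)])"

lemma upt_app: "i \<le> j \<Longrightarrow> j \<le> k \<Longrightarrow> [i..<j] @ [j..<k] = [i..<k]"
  using upt_add_eq_append[of i j "k-j"] by simp

lemma tele:
  assumes mono: "\<And>x y. x \<le> y \<Longrightarrow> y \<le> b \<Longrightarrow> q!x \<le> (q!y::nat)" and ab: "a \<le> b"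
  shows "concat (map (\<lambda>j. [Suc (q!(j-1))..<Suc (q!j)]) [Suc a..<Suc b]) = [Suc (q!a)..<Suc (q!b)]"
  using ab mono
proof (induction b rule: dec_induct)
  case base
  then show ?case by simp
next
  case (step b)
  have "concat (map (\<lambda>j. [Suc (q!(j-1))..<Suc (q!j)]) [Suc a..<Suc (Suc b)])
     = concat (map (\<lambda>j. [Suc (q!(j-1))..<Suc (q!j)]) [Suc a..<Suc b]) @ [Suc (q!b)..<Suc (q!Suc b)]"
    using step by simp
  also have "\<dots> = [Suc (q!a)..<Suc (q!b)] @ [Suc (q!b)..<Suc (q!Suc b)]"
    using step by simp
  also have "\<dots> = [Suc (q!a)..<Suc (q!Suc b)]"
    using step(1) step.prems[of a b] step.prems[of b "Suc b"]
    by (intro upt_app) auto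
  finally show ?case .
qed

lemma lab_act_T_append: "lab_act True (A @ B) = lab_act True B @ lab_act True A"
  by (simp add: lab_act_def)
lemma lab_act_TT: "lab_act True (lab_act True A) = A"
  by (simp add: lab_act_def rev_map[symmetric] case_prod_beta comp_def)

lemma concat_labT: "concat (map (\<lambda>j. lab_act True (Y j)) L) = lab_act True (concat (map Y (rev L)))"
  by (induction L) (auto simp: lab_act_T_append lab_act_def)

lemma concat_pl: "concat (map (\<lambda>j. pl (h j)) L) = pl (concat (map h L))"
  by (induction L) (auto simp: pl_def)

lemma comp_pl: "concat (map (\<lambda>(j,\<alpha>). lab_act \<alpha> (X j)) (pl L)) = concat (map X L)"
  by (induction L) (auto simp: pl_def lab_act_def)

lemma comp_flip: "concat (map (\<lambda>(j,\<alpha>). lab_act \<alpha> (X j)) (lab_act True (pl L))) = concat (map (\<lambda>j. lab_act True (X j)) (rev L))"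
  by (induction L) (auto simp: pl_def lab_act_def)

definition wfp :: "nat list \<Rightarrow> nat \<Rightarrow> nat \<Rightarrow> bool" where
  "wfp p n m \<longleftrightarrow> length p = Suc n \<and> sorted p \<and> (\<forall>x \<in> set p. x \<le> m)"

lemma wfp_mono: "wfp p n m \<Longrightarrow> x \<le> y \<Longrightarrow> y \<le> n \<Longrightarrow> p!x \<le> p!y"
  unfolding wfp_def by (simp add: sorted_nth_mono)
lemma wfp_le: "wfp p n m \<Longrightarrow> x \<le> n \<Longrightarrow> p!x \<le> m"
  unfolding wfp_def by auto

lemma bf_pos: "wfp p n m \<Longrightarrow> 0 < i \<Longrightarrow> j \<in> set (bf p n m i) \<Longrightarrow> 0 < j"
  by (auto simp: bf_def)

lemma bf_le: "wfp p n m \<Longrightarrow> i \<le> n \<Longrightarrow> j \<in> set (bf p n m i) \<Longrightarrow> j \<le> m"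
  using wfp_le[of p n m i] wfp_le[of p n m "i-1"] by (auto simp: bf_def split: if_splits)

lemma bfB:
  assumes p: "wfp p n m" and q: "wfp q m r" and i: "i \<le> n"
  shows "concat (map (bf q m r) (bf p n m i)) = bf (map (\<lambda>i. q!(p!i)) [0..<Suc n]) n r i"
proof (cases "i = 0")
  case True
  have qm: "\<And>x y. x \<le> y \<Longrightarrow> y \<le> m \<Longrightarrow> q!x \<le> q!y" using wfp_mono[OF q] by blast
  have e1: "concat (map (bf q m r) [Suc (p!n)..<Suc m]) = [Suc (q!(p!n))..<Suc (q!m)]"
  proof -
    have "concat (map (bf q m r) [Suc (p!n)..<Suc m]) = concat (map (\<lambda>j. [Suc (q!(j-1))..<Suc (q!j)]) [Suc (p!n)..<Suc m])"
      by (intro arg_cong[where f=concat] map_cong) (auto simp: bf_def)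
    also have "\<dots> = [Suc (q!(p!n))..<Suc (q!m)]" by (rule tele[OF qm]) (use wfp_le[OF p, of n] in auto)
    finally show ?thesis .
  qed
  have e2: "concat (map (bf q m r) [Suc 0..<Suc (p!0)]) = [Suc (q!0)..<Suc (q!(p!0))]"
  proof -
    have "concat (map (bf q m r) [Suc 0..<Suc (p!0)]) = concat (map (\<lambda>j. [Suc (q!(j-1))..<Suc (q!j)]) [Suc 0..<Suc (p!0)])"
      by (intro arg_cong[where f=concat] map_cong) (auto simp: bf_def)
    also have "\<dots> = [Suc (q!0)..<Suc (q!(p!0))]" by (rule tele[OF qm]) (use wfp_le[OF p, of 0] in auto)
    finally show ?thesis .
  qed
  have "bf p n m i = [Suc (p!n)..<Suc m] @ 0 # [Suc 0..<Suc (p!0)]"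
    using True by (simp add: bf_def upt_conv_Cons)
  hence "concat (map (bf q m r) (bf p n m i)) = [Suc (q!(p!n))..<Suc (q!m)] @ ([Suc (q!m)..<Suc r] @ [0..<Suc (q!0)]) @ [Suc (q!0)..<Suc (q!(p!0))]"
    using e1 e2 by (simp add: bf_def)
  also have "\<dots> = [Suc (q!(p!n))..<Suc r] @ [0..<Suc (q!(p!0))]"
  proof -
    have a: "[Suc (q!(p!n))..<Suc (q!m)] @ [Suc (q!m)..<Suc r] = [Suc (q!(p!n))..<Suc r]"
      using qm[of "p!n" m] wfp_le[OF p, of n] wfp_le[OF q, of m] by (intro upt_app) auto
    have b: "[0..<Suc (q!0)] @ [Suc (q!0)..<Suc (q!(p!0))] = [0..<Suc (q!(p!0))]"
      using qm[of 0 "p!0"] wfp_le[OF p, of 0] by (intro upt_app) auto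
    show ?thesis using a b by (metis append_assoc)
  qed
  also have "\<dots> = bf (map (\<lambda>i. q!(p!i)) [0..<Suc n]) n r i"
    using True by (simp add: bf_def nth_map del: upt_Suc)
  finally show ?thesis .
next
  case False
  have qm: "\<And>x y. x \<le> y \<Longrightarrow> y \<le> m \<Longrightarrow> q!x \<le> q!y" using wfp_mono[OF q] by blast
  have "concat (map (bf q m r) (bf p n m i)) = concat (map (\<lambda>j. [Suc (q!(j-1))..<Suc (q!j)]) [Suc (p!(i-1))..<Suc (p!i)])"
    using False unfolding bf_def[of p n m i] by (simp del: upt_Suc) (intro arg_cong[where f=concat] map_cong, auto simp: bf_def)
  also have "\<dots> = [Suc (q!(p!(i-1)))..<Suc (q!(p!i))]"
    by (rule tele[OF qm]) (use wfp_le[OF p i] wfp_mono[OF p, of "i-1" i] i in auto)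
  also have "\<dots> = bf (map (\<lambda>i. q!(p!i)) [0..<Suc n]) n r i"
    using False i by (simp add: bf_def nth_map del: upt_Suc) (subst nth_upt, auto)
  finally show ?thesis .
qed

lemma rev_refl:
  assumes "1 \<le> a" "a \<le> b" "b \<le> Suc m"
  shows "map (rf m) (rev [a..<b]) = [Suc (Suc m) - b..<Suc (Suc m) - a]"
proof (rule nth_equalityI)
  show "length (map (rf m) (rev [a..<b])) = length [Suc (Suc m) - b..<Suc (Suc m) - a]"
    using assms by simp
  fix k assume "k < length (map (rf m) (rev [a..<b]))"
  hence k: "k < b - a" by simp
  have "rev [a..<b] ! k = b - 1 - k" using k by (simp add: rev_nth)
  thus "map (rf m) (rev [a..<b]) ! k = [Suc (Suc m) - b..<Suc (Suc m) - a] ! k"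
    using k assms by (simp add: rf_def)
qed

definition rp :: "nat list \<Rightarrow> nat \<Rightarrow> nat \<Rightarrow> nat list" where
  "rp p n m = map (\<lambda>k. m - p!(n-k)) [0..<Suc n]"

lemma wfp_rp: "wfp p n m \<Longrightarrow> wfp (rp p n m) n m"
proof -
  assume p: "wfp p n m"
  have "sorted (rp p n m)"
    unfolding sorted_iff_nth_mono rp_def
  proof (intro allI impI)
    fix i j assume "i \<le> j" "j < length (map (\<lambda>k. m - p!(n-k)) [0..<Suc n])"
    thus "map (\<lambda>k. m - p!(n-k)) [0..<Suc n] ! i \<le> map (\<lambda>k. m - p!(n-k)) [0..<Suc n] ! j"
      using wfp_mono[OF p, of "n-j" "n-i"] by (simp del: upt_Suc add: diff_le_mono2)
  qed
  thus ?thesis unfolding wfp_def by (auto simp: rp_def)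
qed

lemma bfR:
  assumes p: "wfp p n m" and i: "i \<le> n"
  shows "map (rf m) (rev (bf p n m i)) = bf (rp p n m) n m (rf n i)"
proof (cases "i = 0")
  case True
  have "rev (bf p n m i) = rev [Suc 0..<Suc (p!0)] @ [0] @ rev [Suc (p!n)..<Suc m]"
    using True by (simp add: bf_def upt_conv_Cons del: upt_Suc)
  hence "map (rf m) (rev (bf p n m i)) = [Suc (Suc m) - Suc (p!0)..<Suc (Suc m) - Suc 0] @ [0] @ [Suc (Suc m) - Suc m..<Suc (Suc m) - Suc (p!n)]"
    using wfp_le[OF p, of 0] wfp_le[OF p, of n] by (simp add: rev_refl rf_def del: upt_Suc)
  also have "\<dots> = [Suc (m - p!0)..<Suc m] @ [0..<Suc (m - p!n)]"
    using wfp_le[OF p, of 0] wfp_le[OF p, of n] by (simp add: Suc_diff_le upt_conv_Cons del: upt_Suc)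
  also have "\<dots> = bf (rp p n m) n m (rf n i)"
    using True by (simp add: bf_def rf_def rp_def nth_map del: upt_Suc)
  finally show ?thesis .
next
  case False
  have "map (rf m) (rev (bf p n m i)) = [Suc (Suc m) - Suc (p!i)..<Suc (Suc m) - Suc (p!(i-1))]"
    using False wfp_le[OF p i] wfp_mono[OF p, of "i-1" i] i by (simp add: bf_def rev_refl del: upt_Suc)
  also have "\<dots> = bf (rp p n m) n m (rf n i)"
    using False i wfp_le[OF p i] wfp_le[OF p, of "i-1"] 
    by (simp add: bf_def rf_def rp_def nth_map Suc_diff_le del: upt_Suc) (subst nth_upt, auto simp: Suc_diff_le)
  finally show ?thesis .
qed

lemma rf_le: "i \<le> n \<Longrightarrow> rf n i \<le> n" by (simp add: rf_def) linarith
lemma rf_rf: "i \<le> n \<Longrightarrow> rf n (rf n i) = i" by (simp add: rf_def)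

lemma dr_wf_wfp: "dr_wf (n, m, p, a) \<longleftrightarrow> wfp p n m"
  by (simp add: dr_wf_def wfp_def dr_src_def dr_tgt_def dr_map_def)

definition cmp :: "nat list \<Rightarrow> nat list \<Rightarrow> nat \<Rightarrow> nat list" where
  "cmp q p n = map (\<lambda>i. q!(p!i)) [0..<Suc n]"

lemma Phi_simp: "Phi (n, m, p, a) = (m, n, map (\<lambda>i. if a then lab_act True (pl (bf p n m (rf n i))) else pl (bf p n m i)) [0..<Suc n])"
  by (simp add: Phi_def dr_src_def dr_tgt_def dr_map_def dr_refl_def)

lemma dr_comp_simp: "dr_comp (m, r, q, b) (n, m, p, a) =
   (if b then (n, r, cmp q (rp p n m) n, \<not> a) else (n, r, cmp q p n, a))"
  by (simp add: dr_comp_def dr_src_def dr_tgt_def dr_map_def dr_refl_def Let_def cmp_def rp_def del: upt_Suc)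

lemma fib_comp:
  fixes a b :: bool
  assumes p: "wfp p n m" and q: "wfp q m r" and i: "i \<le> n"
  defines "G \<equiv> \<lambda>j. (if b then lab_act True (pl (bf q m r (rf m j))) else pl (bf q m r j))"
  shows "concat (map (\<lambda>(j,\<alpha>). lab_act \<alpha> (G j)) (if a then lab_act True (pl (bf p n m (rf n i))) else pl (bf p n m i)))
    = (if b then (if \<not> a then lab_act True (pl (bf (cmp q (rp p n m) n) n r (rf n i))) else pl (bf (cmp q (rp p n m) n) n r i))
       else (if a then lab_act True (pl (bf (cmp q p n) n r (rf n i))) else pl (bf (cmp q p n) n r i)))"
proof -
  have B: "\<And>k. k \<le> n \<Longrightarrow> concat (map (bf q m r) (bf p n m k)) = bf (cmp q p n) n r k"
    using bfB[OF p q] by (simp add: cmp_def)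
  have B2: "\<And>k. k \<le> n \<Longrightarrow> concat (map (bf q m r) (bf (rp p n m) n m k)) = bf (cmp q (rp p n m) n) n r k"
    using bfB[OF wfp_rp[OF p] q] by (simp add: cmp_def)
  have R: "\<And>k. k \<le> n \<Longrightarrow> map (rf m) (rev (bf p n m k)) = bf (rp p n m) n m (rf n k)"
    using bfR[OF p] by blast
  have ri: "rf n i \<le> n" using rf_le[OF i] .
  show ?thesis
  proof (cases a)
    case False
    have "concat (map (\<lambda>(j,\<alpha>). lab_act \<alpha> (G j)) (pl (bf p n m i))) = concat (map G (bf p n m i))"
      by (rule comp_pl)
    show ?thesis
    proof (cases b)
      case True
      have "concat (map G (bf p n m i)) = lab_act True (concat (map (\<lambda>j. pl (bf q m r (rf m j))) (rev (bf p n m i))))"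
        using True by (simp add: G_def concat_labT)
      also have "\<dots> = lab_act True (pl (concat (map (bf q m r) (map (rf m) (rev (bf p n m i))))))"
        by (simp add: concat_pl map_map comp_def)
      also have "\<dots> = lab_act True (pl (bf (cmp q (rp p n m) n) n r (rf n i)))"
        using R[OF i] B2[OF ri] by simp
      finally show ?thesis using False True comp_pl by simp
    next
      case b: False
      have "concat (map G (bf p n m i)) = pl (concat (map (bf q m r) (bf p n m i)))"
        using b by (simp add: G_def concat_pl)
      also have "\<dots> = pl (bf (cmp q p n) n r i)" using B[OF i] by simp
      finally show ?thesis using False b comp_pl by simp
    qed
  next
    case True
    have c: "concat (map (\<lambda>(j,\<alpha>). lab_act \<alpha> (G j)) (lab_act True (pl (bf p n m (rf n i)))))
        = concat (map (\<lambda>j. lab_act True (G j)) (rev (bf p n m (rf n i))))"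
      by (rule comp_flip)
    show ?thesis
    proof (cases b)
      case b: True
      have "concat (map (\<lambda>j. lab_act True (G j)) (rev (bf p n m (rf n i))))
          = pl (concat (map (bf q m r) (map (rf m) (rev (bf p n m (rf n i))))))"
        using b by (simp add: G_def lab_act_TT concat_pl map_map comp_def)
      also have "\<dots> = pl (bf (cmp q (rp p n m) n) n r i)"
        using R[OF ri] B2[OF rf_le[OF ri]] rf_rf[OF i] by simp
      finally show ?thesis using True b c by simp
    next
      case b: False
      have "concat (map (\<lambda>j. lab_act True (G j)) (rev (bf p n m (rf n i))))
          = lab_act True (pl (concat (map (bf q m r) (bf p n m (rf n i)))))"
        using b by (simp add: G_def concat_labT concat_pl)
      also have "\<dots> = lab_act True (pl (bf (cmp q p n) n r (rf n i)))"
        using B[OF ri] by simp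
      finally show ?thesis using True b c by simp
    qed
  qed
qed

lemma functorial:
  assumes f: "dr_wf f" and g: "dr_wf g" and fg: "dr_tgt f = dr_src g"
  shows "Phi (dr_comp g f) = if_comp (Phi f) (Phi g)"
proof -
  obtain n m p a where fe: "f = (n, m, p, a)" by (cases f) auto
  obtain m' r q b where ge: "g = (m', r, q, b)" by (cases g) auto
  have mm: "m' = m" using fg fe ge by (simp add: dr_tgt_def dr_src_def)
  have p: "wfp p n m" using f fe dr_wf_wfp by simp
  have q: "wfp q m r" using g ge mm dr_wf_wfp by simp
  define G where "G \<equiv> \<lambda>j. (if b then lab_act True (pl (bf q m r (rf m j))) else pl (bf q m r j))"
  have Gf: "\<And>j. j \<le> m \<Longrightarrow> if_fib (Phi g) ! j = G j"
    unfolding ge mm Phi_simp if_fib_def G_def by (simp del: upt_Suc)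
  have fibeq: "\<And>i. i \<le> n \<Longrightarrow>
     concat (map (\<lambda>(j,\<alpha>). lab_act \<alpha> (if_fib (Phi g) ! j)) (if a then lab_act True (pl (bf p n m (rf n i))) else pl (bf p n m i)))
    = concat (map (\<lambda>(j,\<alpha>). lab_act \<alpha> (G j)) (if a then lab_act True (pl (bf p n m (rf n i))) else pl (bf p n m i)))"
  proof -
    fix i assume i: "i \<le> n"
    have "\<And>x. x \<in> set (if a then lab_act True (pl (bf p n m (rf n i))) else pl (bf p n m i)) \<Longrightarrow> fst x \<le> m"
      using bf_le[OF p i] bf_le[OF p rf_le[OF i]] by (cases a) (auto simp: lab_act_def pl_def)
    thus "?thesis i"
      by (intro arg_cong[where f=concat] map_cong) (auto simp: Gf)
  qed
  define Ff where "Ff \<equiv> \<lambda>i. if a then lab_act True (pl (bf p n m (rf n i))) else pl (bf p n m i)"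
  define T where "T \<equiv> \<lambda>i. (if b then (if \<not> a then lab_act True (pl (bf (cmp q (rp p n m) n) n r (rf n i))) else pl (bf (cmp q (rp p n m) n) n r i))
       else (if a then lab_act True (pl (bf (cmp q p n) n r (rf n i))) else pl (bf (cmp q p n) n r i)))"
  have PF: "Phi f = (m, n, map Ff [0..<Suc n])" unfolding fe Phi_simp Ff_def by simp
  have PG: "if_src (Phi g) = r" unfolding ge Phi_simp if_src_def by simp
  have L: "if_comp (Phi f) (Phi g) = (r, n, map (\<lambda>i. concat (map (\<lambda>(j,\<alpha>). lab_act \<alpha> (if_fib (Phi g) ! j)) (Ff i))) [0..<Suc n])"
    unfolding if_comp_def PG by (simp add: PF if_tgt_def if_fib_def del: upt_Suc)
  have Rr: "Phi (dr_comp g f) = (r, n, map T [0..<Suc n])"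
    unfolding fe ge mm dr_comp_simp T_def by (cases b; cases a) (simp_all add: Phi_simp del: upt_Suc)
  show ?thesis
    unfolding L Rr
  proof (intro arg_cong2[where f=Pair] refl map_cong)
    fix i assume "i \<in> set [0..<Suc n]"
    hence i: "i \<le> n" by (simp del: upt_Suc)
    show "T i = concat (map (\<lambda>(j,\<alpha>). lab_act \<alpha> (if_fib (Phi g) ! j)) (Ff i))"
      using fibeq[OF i] fib_comp[OF p q i, of b a] unfolding Ff_def T_def G_def by simp
  qed
qed

lemma bf_id: "k \<le> n \<Longrightarrow> bf [0..<Suc n] n n k = [k]"
  by (cases k) (auto simp: bf_def nth_append)

lemma Phi_id: "Phi (dr_id n) = if_id n"
  unfolding dr_id_def Phi_simp if_id_def
  by (auto simp: bf_id pl_def simp del: upt_Suc)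

lemma Phi_refl: "Phi (dr_reflection n) = rhomor n"
  unfolding dr_reflection_def Phi_simp rhomor_def
  by (auto simp: bf_id rf_le pl_def lab_act_def simp del: upt_Suc) (auto simp: rf_def)

lemma Phi_delta: assumes "1 \<le> n" "i \<le> n" shows "Phi (delta n i) = dmor n i"
proof -
  define p where "p = map (\<lambda>k. if k < i then k else Suc k) [0..<n]"
  have pn: "\<And>x. x < n \<Longrightarrow> p!x = (if x < i then x else Suc x)" unfolding p_def by simp
  have sn: "Suc (n-1) = n" using assms by simp
  show ?thesis
    unfolding delta_def Phi_simp dmor_def p_def[symmetric] sn if_False
  proof (intro arg_cong2[where f=Pair] refl map_cong)
    fix k assume "k \<in> set [0..<n]"
    hence k: "k < n" by simp
    show "pl (bf p (n - 1) n k) = (if i < n then (if k < i then [(k, False)] else if k = i then [(i, False), (Suc i, False)] else [(Suc k, False)])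
               else (if k = 0 then [(n, False), (0, False)] else [(k, False)]))"
      using assms k by (cases "k = 0") (auto simp: bf_def pl_def pn upt_conv_Cons)
  qed
qed

lemma Phi_sigma: assumes "j \<le> n" shows "Phi (sigma n j) = smor n j"
proof -
  define p where "p = map (\<lambda>k. if k \<le> j then k else k - 1) [0..<Suc (Suc n)]"
  have pn: "\<And>x. x < Suc (Suc n) \<Longrightarrow> p!x = (if x \<le> j then x else x - 1)" unfolding p_def by (simp del: upt_Suc)
  show ?thesis
    unfolding sigma_def Phi_simp smor_def p_def[symmetric] if_False
  proof (intro arg_cong2[where f=Pair] refl map_cong)
    fix k assume "k \<in> set [0..<Suc (Suc n)]"
    hence k: "k < Suc (Suc n)" by (simp del: upt_Suc)
    show "pl (bf p (Suc n) n k) = (if k \<le> j then [(k, False)] else if k = Suc j then [] else [(k - 1, False)])"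
      using assms k by (cases "k = 0") (auto simp: bf_def pl_def pn upt_conv_Cons)
  qed
qed

lemma map_rf_upt: "map (rf n) [Suc 0..<Suc n] = rev [Suc 0..<Suc n]"
  by (rule nth_equalityI) (auto simp: rev_nth rf_def simp del: upt_Suc)

lemma bf_all:
  assumes p: "wfp p n m"
  shows "concat (map (bf p n m) [0..<Suc n]) = [Suc (p!n)..<Suc m] @ [0..<Suc (p!n)]"
proof -
  have "concat (map (bf p n m) [Suc 0..<Suc n]) = concat (map (\<lambda>j. [Suc (p!(j-1))..<Suc (p!j)]) [Suc 0..<Suc n])"
    by (intro arg_cong[where f=concat] map_cong) (auto simp: bf_def)
  also have "\<dots> = [Suc (p!0)..<Suc (p!n)]"
    by (rule tele) (use wfp_mono[OF p] in auto)
  finally have e: "concat (map (bf p n m) [Suc 0..<Suc n]) = [Suc (p!0)..<Suc (p!n)]" .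
  have "concat (map (bf p n m) [0..<Suc n]) = bf p n m 0 @ concat (map (bf p n m) [Suc 0..<Suc n])"
    by (simp add: upt_conv_Cons del: upt_Suc)
  also have "\<dots> = [Suc (p!n)..<Suc m] @ [0..<Suc (p!0)] @ [Suc (p!0)..<Suc (p!n)]"
    using e by (simp add: bf_def del: upt_Suc)
  also have "\<dots> = [Suc (p!n)..<Suc m] @ [0..<Suc (p!n)]"
    using wfp_mono[OF p, of 0 n] by (simp add: upt_app del: upt_Suc)
  finally show ?thesis .
qed

lemma IG:
  assumes f: "dr_wf f"
  shows "IGamma_mor (Phi f) \<and> if_src (Phi f) = dr_tgt f \<and> if_tgt (Phi f) = dr_src f"
proof -
  obtain n m p a where fe: "f = (n, m, p, a)" by (cases f) auto
  have p: "wfp p n m" using f fe dr_wf_wfp by simp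
  have pn: "p!n \<le> m" using wfp_le[OF p] by simp
  define W where "W = concat (map (bf p n m) [0..<Suc n])"
  have W: "W = [Suc (p!n)..<Suc m] @ [0..<Suc (p!n)]" unfolding W_def by (rule bf_all[OF p])
  have Wd: "distinct W" "set W = {0..m}" using pn unfolding W by auto
  have fstpl: "\<And>L. map fst (pl L) = L" by (induct_tac L) (auto simp: pl_def)
  have fstlab: "\<And>L. map fst (lab_act True (pl L)) = rev L" by (induct_tac L) (auto simp: pl_def lab_act_def)
  have "distinct (map fst (concat (if_fib (Phi f)))) \<and> set (map fst (concat (if_fib (Phi f)))) = {0..m}"
  proof (cases a)
    case False
    have "map fst (concat (if_fib (Phi f))) = W"
      unfolding fe Phi_simp if_fib_def W_def using False by (simp add: map_concat fstpl comp_def del: upt_Suc)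
    thus ?thesis using Wd by simp
  next
    case True
    have "map fst (concat (if_fib (Phi f))) = concat (map (\<lambda>i. rev (bf p n m (rf n i))) [0..<Suc n])"
      unfolding fe Phi_simp if_fib_def using True by (simp add: map_concat fstlab comp_def del: upt_Suc)
    also have "\<dots> = rev (bf p n m 0) @ concat (map (\<lambda>i. rev (bf p n m i)) (map (rf n) [Suc 0..<Suc n]))"
      by (simp add: upt_conv_Cons comp_def del: upt_Suc) (simp add: rf_def)
    also have "\<dots> = rev (bf p n m 0) @ rev (concat (map (bf p n m) [Suc 0..<Suc n]))"
      unfolding map_rf_upt by (simp add: rev_concat rev_map comp_def)
    finally have e: "map fst (concat (if_fib (Phi f))) = rev (bf p n m 0) @ rev (concat (map (bf p n m) [Suc 0..<Suc n]))" .
    have W2: "W = bf p n m 0 @ concat (map (bf p n m) [Suc 0..<Suc n])"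
      unfolding W_def by (simp add: upt_conv_Cons del: upt_Suc)
    show ?thesis unfolding e using Wd unfolding W2 by auto
  qed
  moreover have "length (if_fib (Phi f)) = Suc (if_tgt (Phi f))"
    unfolding fe Phi_simp if_fib_def if_tgt_def by simp
  moreover have "0 \<in> fst ` set (if_fib (Phi f) ! 0)"
    unfolding fe Phi_simp if_fib_def by (auto simp: bf_def pl_def lab_act_def rf_def image_iff nth_Cons' simp del: upt_Suc) force+
  ultimately show ?thesis
    unfolding IGamma_mor_def if_wf_def using fe by (simp add: Phi_simp if_src_def if_tgt_def dr_src_def dr_tgt_def)
qed

lemma faithful:
  assumes f: "dr_wf f" and g: "dr_wf g" and s: "dr_src f = dr_src g" and t: "dr_tgt f = dr_tgt g"
    and e: "Phi f = Phi g"
  shows "f = g"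
proof -
  obtain n m p a where fe: "f = (n, m, p, a)" by (cases f) auto
  obtain n' m' q b where ge: "g = (n', m', q, b)" by (cases g) auto
  have nn: "n' = n" "m' = m" using s t fe ge by (auto simp: dr_src_def dr_tgt_def)
  have p: "wfp p n m" using f fe dr_wf_wfp by simp
  have q: "wfp q n m" using g ge nn dr_wf_wfp by simp
  define Ff where "Ff \<equiv> \<lambda>p a i. if a then lab_act True (pl (bf p n m (rf n i))) else pl (bf p n m i)"
  have "map (Ff p a) [0..<Suc n] = map (Ff q b) [0..<Suc n]"
    using e unfolding fe ge nn Phi_simp Ff_def by simp
  hence FF: "\<And>i. i \<le> n \<Longrightarrow> Ff p a i = Ff q b i"
    by (metis (no_types, lifting) le_imp_less_Suc map_eq_conv atLeastLessThan_iff set_upt zero_le)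
  have lab: "(0, a) \<in> set (Ff p a 0) \<and> (\<forall>x \<in> set (Ff p a 0). snd x = a)" for p a
    by (auto simp: Ff_def bf_def pl_def lab_act_def rf_def)
  have ab: "a = b" using lab[of a p] lab[of b q] FF[of 0] by auto
  have fstpl: "\<And>L. map fst (pl L) = L" by (induct_tac L) (auto simp: pl_def)
  have fstlab: "\<And>L. map fst (lab_act True (pl L)) = rev L" by (induct_tac L) (auto simp: pl_def lab_act_def)
  have BB: "bf p n m k = bf q n m k" if k: "k \<le> n" for k
  proof (cases a)
    case True
    have "Ff p a (rf n k) = Ff q b (rf n k)" using FF rf_le[OF k] by blast
    hence "rev (bf p n m k) = rev (bf q n m k)"
      using True ab rf_rf[OF k] unfolding Ff_def by (metis fstlab)
    thus ?thesis by simp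
  next
    case False
    have "Ff p a k = Ff q b k" using FF k by blast
    thus ?thesis using False ab unfolding Ff_def by (metis fstpl)
  qed
  have PQ: "p!k = q!k" if "k \<le> n" for k
    using that
  proof (induction k)
    case 0
    have "last (bf p n m 0) = p!0" "last (bf q n m 0) = q!0" by (simp_all add: bf_def)
    then show ?case using BB[of 0] by simp
  next
    case (Suc k)
    have "length (bf p n m (Suc k)) = p!(Suc k) - p!k" "length (bf q n m (Suc k)) = q!(Suc k) - q!k"
      by (simp_all add: bf_def del: upt_Suc)
    moreover have "p!k \<le> p!Suc k" "q!k \<le> q!Suc k" using wfp_mono[OF p] wfp_mono[OF q] Suc.prems by auto
    ultimately show ?case using BB[OF Suc.prems] Suc by force
  qed
  have "p = q"
    using p q PQ by (intro nth_equalityI) (auto simp: wfp_def less_Suc_eq_le)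
  thus ?thesis using fe ge nn ab by simp
qed

lemma sorted_map_upt:
  assumes "\<And>i j. i \<le> j \<Longrightarrow> j < k \<Longrightarrow> f i \<le> (f j :: nat)"
  shows "sorted (map f [0..<k])"
  unfolding sorted_iff_nth_mono using assms by (simp del: upt_Suc)

lemma wfp_cmp: "wfp p n m \<Longrightarrow> wfp q m r \<Longrightarrow> wfp (cmp q p n) n r"
  unfolding cmp_def
  apply (subst wfp_def)
  apply (intro conjI sorted_map_upt)
    apply (simp del: upt_Suc)
   apply (rule wfp_mono, assumption)
    apply (rule wfp_mono, assumption, assumption, simp)
   apply (rule wfp_le, assumption, simp)
  apply (auto simp del: upt_Suc)
  apply (rule wfp_le, assumption, rule wfp_le, assumption, simp)
  done

lemma wf_comp:
  assumes f: "dr_wf f" and g: "dr_wf g" and fg: "dr_tgt f = dr_src g"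
  shows "dr_wf (dr_comp g f)"
proof -
  obtain n m p a where fe: "f = (n, m, p, a)" by (cases f) auto
  obtain m' r q b where ge: "g = (m', r, q, b)" by (cases g) auto
  have mm: "m' = m" using fg fe ge by (simp add: dr_tgt_def dr_src_def)
  have p: "wfp p n m" using f fe dr_wf_wfp by simp
  have q: "wfp q m r" using g ge mm dr_wf_wfp by simp
  show ?thesis unfolding fe ge mm dr_comp_simp
    using wfp_cmp[OF p q] wfp_cmp[OF wfp_rp[OF p] q] by (simp add: dr_wf_wfp)
qed

lemma wf_id: "dr_wf (dr_id n)"
  by (simp add: dr_id_def dr_wf_wfp wfp_def del: upt_Suc)
lemma wf_refl: "dr_wf (dr_reflection n)"
  by (simp add: dr_reflection_def dr_wf_wfp wfp_def del: upt_Suc)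
lemma wf_delta: "1 \<le> n \<Longrightarrow> i \<le> n \<Longrightarrow> dr_wf (delta n i)"
  unfolding delta_def dr_wf_wfp wfp_def
  by (auto intro!: sorted_map_upt)
lemma wf_sigma: "j \<le> n \<Longrightarrow> dr_wf (sigma n j)"
  unfolding sigma_def dr_wf_wfp wfp_def
  by (auto intro!: sorted_map_upt simp del: upt_Suc)

lemma Rgen_sub: "x \<in> Rgen \<Longrightarrow> x \<in> Phi ` {f. dr_wf f}"
proof (induction rule: Rgen.induct)
  case (R_id n)
  then show ?case using Phi_id wf_id by (metis image_eqI mem_Collect_eq)
next
  case (R_d n i)
  then show ?case using Phi_delta wf_delta by (metis image_eqI mem_Collect_eq)
next
  case (R_s j n)
  then show ?case using Phi_sigma wf_sigma by (metis image_eqI mem_Collect_eq)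
next
  case (R_rho n)
  then show ?case using Phi_refl wf_refl by (metis image_eqI mem_Collect_eq)
next
  case (R_comp f g)
  obtain a where a: "dr_wf a" "f = Phi a" using R_comp by auto
  obtain b where b: "dr_wf b" "g = Phi b" using R_comp by auto
  have "dr_tgt b = dr_src a" using R_comp(3) a b IG by metis
  hence "Phi (dr_comp a b) = if_comp g f" using functorial[OF b(1) a(1)] a b by simp
  moreover have "dr_wf (dr_comp a b)" using wf_comp[OF b(1) a(1)] \<open>dr_tgt b = dr_src a\<close> by simp
  ultimately show ?case by (metis image_eqI mem_Collect_eq)
qed



lemma adj_eq:
  assumes "sorted p" "\<not> distinct p"
  shows "\<exists>j. Suc j < length p \<and> p!j = p!Suc j"
proof (rule ccontr)
  assume neg: "\<not> ?thesis"
  have adj: "p!j < p!Suc j" if "Suc j < length p" for j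
    using that sorted_nth_mono[OF assms(1), of j "Suc j"] neg by force
  have "p!i < p!k" if "i < k" "k < length p" for i k
    using that
  proof (induction k)
    case 0 then show ?case by simp
  next
    case (Suc k)
    show ?case
    proof (cases "i = k")
      case True then show ?thesis using adj Suc.prems by simp
    next
      case False
      then have "p!i < p!k" using Suc by simp
      then show ?thesis using adj[of k] Suc.prems by simp
    qed
  qed
  note lt = this
  have "distinct p" unfolding distinct_conv_nth
  proof (intro allI impI)
    fix i k assume "i < length p" "k < length p" "i \<noteq> k"
    thus "p!i \<noteq> p!k" using lt[of i k] lt[of k i] by (cases "i < k") auto
  qed
  thus False using assms(2) by simp
qed

lemma decomp: "wfp p n m \<Longrightarrow> Phi (n, m, p, False) \<in> Rgen"
proof (induction "n + m" arbitrary: n m p rule: less_induct)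
  case less
  note p = less.prems
  show ?case
  proof (cases "\<exists>k \<le> m. k \<notin> set p")
    case True
    then obtain k where k: "k \<le> m" "k \<notin> set p" by blast
    have m1: "1 \<le> m"
    proof (rule ccontr)
      assume "\<not> 1 \<le> m"
      hence "m = 0" by simp
      hence "k = 0" "p!0 = 0" using k wfp_le[OF p, of 0] by auto
      moreover have "p!0 \<in> set p" using p by (simp add: wfp_def)
      ultimately show False using k by simp
    qed
    define p' where "p' = map (\<lambda>x. if x < k then x else x - 1) p"
    have p': "wfp p' n (m - 1)"
      unfolding wfp_def p'_def
    proof (intro conjI)
      show "length (map (\<lambda>x. if x < k then x else x - 1) p) = Suc n" using p by (simp add: wfp_def)
      show "sorted (map (\<lambda>x. if x < k then x else x - 1) p)"
        unfolding sorted_map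
        by (rule sorted_wrt_mono_rel[of _ "(\<le>)"]) (use p in \<open>auto simp: wfp_def\<close>)
      show "\<forall>x\<in>set (map (\<lambda>x. if x < k then x else x - 1) p). x \<le> m - 1"
        using p k unfolding wfp_def by auto
    qed
    have eq: "dr_comp (delta m k) (n, m - 1, p', False) = (n, m, p, False)"
    proof -
      have dd: "delta m k = (m - 1, m, map (\<lambda>k'. if k' < k then k' else Suc k') [0..<m], False)"
        by (simp add: delta_def)
      have "cmp (map (\<lambda>k'. if k' < k then k' else Suc k') [0..<m]) p' n = p"
      proof (rule nth_equalityI)
        show "length (cmp (map (\<lambda>k'. if k' < k then k' else Suc k') [0..<m]) p' n) = length p"
          using p by (simp add: cmp_def wfp_def)
        fix i assume "i < length (cmp (map (\<lambda>k'. if k' < k then k' else Suc k') [0..<m]) p' n)"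
        hence i: "i \<le> n" by (simp add: cmp_def)
        have pi: "p!i \<le> m" "p!i \<noteq> k" using wfp_le[OF p i] k p i by (auto simp: wfp_def)
        have p'i: "p'!i = (if p!i < k then p!i else p!i - 1)" using p i by (simp add: p'_def wfp_def)
        have "p'!i < m" using p'i pi m1 k(1) by auto
        thus "cmp (map (\<lambda>k'. if k' < k then k' else Suc k') [0..<m]) p' n ! i = p!i"
          using i p'i pi by (simp add: cmp_def nth_append del: upt_Suc) linarith
      qed
      thus ?thesis unfolding dd using dr_comp_simp[of "m-1" m "map (\<lambda>k'. if k' < k then k' else Suc k') [0..<m]" False n p' False] by simp
    qed
    have w1: "dr_wf (n, m - 1, p', False)" using p' dr_wf_wfp by simp
    have "Phi (n, m, p, False) = if_comp (Phi (n, m - 1, p', False)) (Phi (delta m k))"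
      using functorial[OF w1 wf_delta[OF m1 k(1)]] eq by (simp add: dr_tgt_def delta_def dr_src_def)
    also have "\<dots> = if_comp (Phi (n, m - 1, p', False)) (dmor m k)" using Phi_delta[OF m1 k(1)] by simp
    also have "\<dots> \<in> Rgen"
    proof (rule R_comp)
      show "dmor m k \<in> Rgen" using R_d[OF m1 k(1)] .
      show "Phi (n, m - 1, p', False) \<in> Rgen" using less.hyps[OF _ p'] m1 by simp
      show "if_tgt (dmor m k) = if_src (Phi (n, m - 1, p', False))"
        by (simp add: dmor_def if_tgt_def if_src_def Phi_simp)
    qed
    finally show ?thesis .
  next
    case False
    hence allin: "set p = {0..m}" using p by (auto simp: wfp_def)
    show ?thesis
    proof (cases "distinct p")
      case True
      have "p = [0..<Suc m]"
      proof -
        have s1: "set [0..<Suc m] = {0..m}" by (simp only: set_upt atLeastLessThanSuc_atLeastAtMost)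
        have ps: "sorted p" using p by (simp add: wfp_def)
        show ?thesis by (rule sorted_distinct_set_unique[OF ps True sorted_upt distinct_upt]) (simp only: s1 allin)
      qed
      hence "n = m" "p = [0..<Suc m]" using p by (auto simp: wfp_def)
      hence "(n, m, p, False) = dr_id m" by (simp add: dr_id_def)
      thus ?thesis using Phi_id R_id by metis
    next
      case nd: False
      obtain j where j: "Suc j < length p" "p!j = p!Suc j" using adj_eq[OF _ nd] p by (auto simp: wfp_def)
      have jn: "j < n" "1 \<le> n" "j \<le> n - 1" using j p by (auto simp: wfp_def)
      define p' where "p' = map (\<lambda>i. if i \<le> j then p!i else p!Suc i) [0..<n]"
      have sn: "Suc (n - 1) = n" using jn by simp
      have p': "wfp p' (n - 1) m"
        unfolding wfp_def p'_def sn
      proof (intro conjI sorted_map_upt)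
        show "length (map (\<lambda>i. if i \<le> j then p!i else p!Suc i) [0..<n]) = n" by simp
        fix a b assume ab: "a \<le> b" "b < n"
        show "(if a \<le> j then p!a else p!Suc a) \<le> (if b \<le> j then p!b else p!Suc b)"
          using wfp_mono[OF p, of a b] wfp_mono[OF p, of a "Suc b"] wfp_mono[OF p, of "Suc a" "Suc b"] ab by auto
      next
        show "\<forall>x\<in>set (map (\<lambda>i. if i \<le> j then p!i else p!Suc i) [0..<n]). x \<le> m"
          using wfp_le[OF p] by auto
      qed
      define sm where "sm = map (\<lambda>k. if k \<le> j then k else k - 1) [0..<Suc n]"
      have sg: "sigma (n - 1) j = (n, n - 1, sm, False)" unfolding sigma_def sm_def sn by simp
      have "cmp p' sm n = p"
      proof (rule nth_equalityI)
        show "length (cmp p' sm n) = length p" using p by (simp add: cmp_def wfp_def)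
        fix i assume "i < length (cmp p' sm n)"
        hence i: "i \<le> n" by (simp add: cmp_def)
        have smi: "sm!i = (if i \<le> j then i else i - 1)" using i by (simp add: sm_def del: upt_Suc)
        have "sm!i < n" using smi i jn by auto
        hence "p'!(sm!i) = (if sm!i \<le> j then p!(sm!i) else p!Suc (sm!i))" by (simp add: p'_def)
        hence pp: "p'!(sm!i) = (if sm!i \<le> j then p!(sm!i) else p!Suc (sm!i))" .
        have "p'!(sm!i) = p!i"
        proof (cases "i \<le> j")
          case True thus ?thesis using pp smi by simp
        next
          case False
          show ?thesis
          proof (cases "i = Suc j")
            case True thus ?thesis using pp smi j(2) by simp
          next
            case False
            hence "sm!i = i - 1" "\<not> i - 1 \<le> j" "Suc (i - 1) = i" using smi \<open>\<not> i \<le> j\<close> by auto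
            thus ?thesis using pp by simp
          qed
        qed
        thus "cmp p' sm n ! i = p!i" using i by (simp add: cmp_def del: upt_Suc)
      qed
      hence eq: "dr_comp (n - 1, m, p', False) (sigma (n - 1) j) = (n, m, p, False)"
        unfolding sg by (simp add: dr_comp_simp)
      have w1: "dr_wf (n - 1, m, p', False)" using p' dr_wf_wfp by simp
      have "Phi (n, m, p, False) = if_comp (Phi (sigma (n - 1) j)) (Phi (n - 1, m, p', False))"
      proof -
        have "dr_tgt (sigma (n - 1) j) = dr_src (n - 1, m, p', False)" by (simp add: sigma_def dr_tgt_def dr_src_def)
        from functorial[OF wf_sigma[OF jn(3)] w1 this] show ?thesis using eq by simp
      qed
      also have "\<dots> = if_comp (smor (n - 1) j) (Phi (n - 1, m, p', False))" using Phi_sigma[OF jn(3)] by simp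
      also have "\<dots> \<in> Rgen"
      proof (rule R_comp)
        show "smor (n - 1) j \<in> Rgen" using R_s[OF jn(3)] .
        show "Phi (n - 1, m, p', False) \<in> Rgen" using less.hyps[OF _ p'] jn by simp
        show "if_tgt (Phi (n - 1, m, p', False)) = if_src (smor (n - 1) j)"
          by (simp add: smor_def if_tgt_def if_src_def Phi_simp)
      qed
      finally show ?thesis .
    qed
  qed
qed

lemma img_sub: "dr_wf f \<Longrightarrow> Phi f \<in> Rgen"
proof -
  assume f: "dr_wf f"
  obtain n m p a where fe: "f = (n, m, p, a)" by (cases f) auto
  have p: "wfp p n m" using f fe dr_wf_wfp by simp
  show ?thesis
  proof (cases a)
    case False thus ?thesis using decomp[OF p] fe by simp
  next
    case True
    have c: "cmp p [0..<Suc n] n = p"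
    proof (rule nth_equalityI)
      show "length (cmp p [0..<Suc n] n) = length p" using p by (simp add: cmp_def wfp_def del: upt_Suc)
      fix i assume "i < length (cmp p [0..<Suc n] n)"
      hence i: "i < Suc n" by (simp add: cmp_def del: upt_Suc)
      thus "cmp p [0..<Suc n] n ! i = p!i" by (simp add: cmp_def del: upt_Suc)
    qed
    have eq: "dr_comp (n, m, p, False) (dr_reflection n) = (n, m, p, True)"
      unfolding dr_reflection_def dr_comp_simp c by simp
    have w: "dr_wf (n, m, p, False)" using p dr_wf_wfp by simp
    have "Phi f = if_comp (Phi (dr_reflection n)) (Phi (n, m, p, False))"
      using functorial[OF wf_refl w] eq fe True by (simp add: dr_reflection_def dr_tgt_def dr_src_def)
    also have "\<dots> \<in> Rgen"
    proof (rule R_comp)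
      show "Phi (n, m, p, False) \<in> Rgen" using decomp[OF p] .
      show "Phi (dr_reflection n) \<in> Rgen" using Phi_refl R_rho by simp
      show "if_tgt (Phi (n, m, p, False)) = if_src (Phi (dr_reflection n))"
        by (simp add: Phi_refl rhomor_def if_tgt_def if_src_def Phi_simp)
    qed
    finally show ?thesis .
  qed
qed


theorem mainTheorem4:
  shows "\<exists>\<Phi> :: drmor \<Rightarrow> ifmor.
    (\<forall>f. dr_wf f \<longrightarrow> IGamma_mor (\<Phi> f) \<and> if_src (\<Phi> f) = dr_tgt f \<and> if_tgt (\<Phi> f) = dr_src f)
  \<and> (\<forall>n. \<Phi> (dr_id n) = if_id n)
  \<and> (\<forall>f g. dr_wf f \<longrightarrow> dr_wf g \<longrightarrow> dr_tgt f = dr_src g \<longrightarrow>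
        \<Phi> (dr_comp g f) = if_comp (\<Phi> f) (\<Phi> g))
  \<and> (\<forall>f g. dr_wf f \<longrightarrow> dr_wf g \<longrightarrow> dr_src f = dr_src g \<longrightarrow> dr_tgt f = dr_tgt g \<longrightarrow>
        \<Phi> f = \<Phi> g \<longrightarrow> f = g)
  \<and> (\<forall>n i. 1 \<le> n \<longrightarrow> i \<le> n \<longrightarrow> \<Phi> (delta n i) = dmor n i)
  \<and> (\<forall>n j. j \<le> n \<longrightarrow> \<Phi> (sigma n j) = smor n j)
  \<and> (\<forall>n. \<Phi> (dr_reflection n) = rhomor n)
  \<and> \<Phi> ` {f. dr_wf f} = Rgen"
proof (rule exI[of _ Phi], intro conjI allI impI)
  show "Phi ` {f. dr_wf f} = Rgen"
    using img_sub Rgen_sub by blast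
qed (auto simp: IG Phi_id functorial faithful Phi_delta Phi_sigma Phi_refl)

end
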